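(* Let $M$ be a strongly regular $po$-$\Gamma$-semigroup. Then for every $a\in M$ there exist $y\in M$ and $\gamma,\mu\in\Gamma$ such that $$a\le a\gamma y\mu a,\quad y\le y\mu a\gamma y,\quad\text{and}\quad a\gamma y=y\gamma a=y\mu a=a\mu y.$$
   Context: A $po$-$\Gamma$-semigroup is a triple $(M,\Gamma,\le)$ where $M,\Gamma$ are nonempty sets with a map $M\times\Gamma\times M\to M$, $(a,\gamma,b)\mapsto a\gamma b$, satisfying $(a\gamma b)\mu c=a\gamma(b\mu c)$ for all $a,b,c\in M$, $\gamma,\mu\in\Gamma$, and $\le$ is a partial order on $M$ such that $a\le b$ implies $a\gamma c\le b\gamma c$ and $c\gamma a\le c\gamma b$ for all $c\in M$, $\gamma\in\Gamma$. $M$ is strongly regular if for every $a\in M$ there exist $x\in M$ and $\gamma,\mu\in\Gamma$ such that $a\le a\gamma x\mu a$ and $a\gamma x=x\gamma a=x\mu a=a\mu x$. *)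

theory Defs
  imports Main
begin

definition po_gamma_semigroup ::
  "'a set \<Rightarrow> 'g set \<Rightarrow> ('a \<Rightarrow> 'g \<Rightarrow> 'a \<Rightarrow> 'a) \<Rightarrow> ('a \<Rightarrow> 'a \<Rightarrow> bool) \<Rightarrow> bool" where
  "po_gamma_semigroup M G op le \<longleftrightarrow>
     M \<noteq> {} \<and> G \<noteq> {} \<and>
     (\<forall>a\<in>M. \<forall>g\<in>G. \<forall>b\<in>M. op a g b \<in> M) \<and>
     (\<forall>a\<in>M. \<forall>b\<in>M. \<forall>c\<in>M. \<forall>g\<in>G. \<forall>m\<in>G. op (op a g b) m c = op a g (op b m c)) \<and>
     (\<forall>a\<in>M. le a a) \<and>
     (\<forall>a\<in>M. \<forall>b\<in>M. le a b \<and> le b a \<longrightarrow> a = b) \<and>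
     (\<forall>a\<in>M. \<forall>b\<in>M. \<forall>c\<in>M. le a b \<and> le b c \<longrightarrow> le a c) \<and>
     (\<forall>a\<in>M. \<forall>b\<in>M. le a b \<longrightarrow>
        (\<forall>c\<in>M. \<forall>g\<in>G. le (op a g c) (op b g c) \<and> le (op c g a) (op c g b)))"

definition strongly_regular ::
  "'a set \<Rightarrow> 'g set \<Rightarrow> ('a \<Rightarrow> 'g \<Rightarrow> 'a \<Rightarrow> 'a) \<Rightarrow> ('a \<Rightarrow> 'a \<Rightarrow> bool) \<Rightarrow> bool" where
  "strongly_regular M G op le \<longleftrightarrow>
     (\<forall>a\<in>M. \<exists>x\<in>M. \<exists>g\<in>G. \<exists>m\<in>G.
        le a (op (op a g x) m a) \<and>
        op a g x = op x g a \<and> op x g a = op x m a \<and> op x m a = op a m x)"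

end

theory Submission
  imports Defs
begin

theorem theorem8:
  fixes M :: "'a set" and G :: "'g set"
    and op :: "'a \<Rightarrow> 'g \<Rightarrow> 'a \<Rightarrow> 'a" and le :: "'a \<Rightarrow> 'a \<Rightarrow> bool"
  assumes "po_gamma_semigroup M G op le"
    and "strongly_regular M G op le"
  shows "\<forall>a\<in>M. \<exists>y\<in>M. \<exists>g\<in>G. \<exists>m\<in>G.
           le a (op (op a g y) m a) \<and> le y (op (op y m a) g y) \<and>
           op a g y = op y g a \<and> op y g a = op y m a \<and> op y m a = op a m y"
proof
  fix a assume aM: "a \<in> M"
  note P = assms(1)[unfolded po_gamma_semigroup_def]
  have cl: "\<And>u g v. u \<in> M \<Longrightarrow> g \<in> G \<Longrightarrow> v \<in> M \<Longrightarrow> op u g v \<in> M" using P by simp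
  have as: "\<And>u v w g h. u \<in> M \<Longrightarrow> v \<in> M \<Longrightarrow> w \<in> M \<Longrightarrow> g \<in> G \<Longrightarrow> h \<in> G \<Longrightarrow>
      op (op u g v) h w = op u g (op v h w)" using P by simp
  have tr: "\<And>u v w. u \<in> M \<Longrightarrow> v \<in> M \<Longrightarrow> w \<in> M \<Longrightarrow> le u v \<Longrightarrow> le v w \<Longrightarrow> le u w"
    using P by (meson)
  have monL: "\<And>u v c g. u \<in> M \<Longrightarrow> v \<in> M \<Longrightarrow> c \<in> M \<Longrightarrow> g \<in> G \<Longrightarrow> le u v \<Longrightarrow> le (op c g u) (op c g v)" using P by blast
  have monR: "\<And>u v c g. u \<in> M \<Longrightarrow> v \<in> M \<Longrightarrow> c \<in> M \<Longrightarrow> g \<in> G \<Longrightarrow> le u v \<Longrightarrow> le (op u g c) (op v g c)" using P by blast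
  obtain x g m where xM: "x \<in> M" and gG: "g \<in> G" and mG: "m \<in> G"
    and h1: "le a (op (op a g x) m a)" and e1: "op a g x = op x g a"
    and e2: "op x g a = op x m a" and e3: "op x m a = op a m x"
    using assms(2) aM unfolding strongly_regular_def by blast
  have s1: "op a m x = op a g x" using e1 e2 e3 by simp
  have s2: "op x m a = op x g a" using e2 by simp
  have s3: "\<And>t k. t \<in> M \<Longrightarrow> k \<in> G \<Longrightarrow> op a m (op x k t) = op a g (op x k t)"
    using as[OF aM xM _ mG] as[OF aM xM _ gG] s1 by simp
  have s4: "\<And>t k. t \<in> M \<Longrightarrow> k \<in> G \<Longrightarrow> op x m (op a k t) = op x g (op a k t)"
    using as[OF xM aM _ mG] as[OF xM aM _ gG] s2 by simp
  define y where "y = op (op x m a) g x"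
  have yM: "y \<in> M" unfolding y_def using cl xM aM gG mG by simp
  have ax: "op a g x \<in> M" "op x m a \<in> M" using cl xM aM gG mG by simp_all
  define b where "b = op (op a g x) m a"
  have bM: "b \<in> M" unfolding b_def using cl ax aM mG by simp
  have h1b: "le a b" using h1 b_def by simp
  note S = as cl aM xM gG mG s1 s2 s3 s4
  have r1: "le b (op (op a g y) m a)"
  proof -
    have "le b (op (op a g x) m b)"
      unfolding b_def[symmetric] using monL[OF aM bM ax(1) mG h1b] b_def by simp
    thus ?thesis unfolding y_def b_def using S by simp
  qed
  have r2: "le y (op (op y m a) g y)"
  proof -
    have q1: "le (op x m a) (op x m b)" using monL[OF aM bM xM mG h1b] .
    have q1': "le y (op (op x m b) g x)"
      unfolding y_def using monR[OF ax(2) _ xM gG q1] cl xM mG bM by simp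
    have bb: "le b (op (op a g x) m b)"
      using monL[OF aM bM ax(1) mG h1b] b_def by simp
    have bbM: "op (op a g x) m b \<in> M" using cl ax bM mG by simp
    have q2: "le (op x m b) (op x m (op (op a g x) m b))"
      using monL[OF bM bbM xM mG bb] .
    have q2': "le (op (op x m b) g x) (op (op x m (op (op a g x) m b)) g x)"
      using monR[OF _ _ xM gG q2] cl xM mG bM bbM by simp
    have "le y (op (op x m (op (op a g x) m b)) g x)"
      using tr[OF yM _ _ q1' q2'] cl xM mG gG bM bbM by simp
    thus ?thesis unfolding y_def b_def using S by simp
  qed
  have f1: "le a (op (op a g y) m a)" using tr[OF aM bM _ h1b r1] cl aM gG yM mG by simp
  have ee: "op a g (op x g (op a g x)) = op x g (op a g (op x g a))"
  proof -
    have "op a g (op x g (op a g x)) = op (op a g x) g (op a g x)" using S by simp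
    also have "\<dots> = op (op x g a) g (op x g a)" using e1 by simp
    also have "\<dots> = op x g (op a g (op x g a))" using S by simp
    finally show ?thesis .
  qed
  have f3: "op a g y = op y g a" unfolding y_def using S ee by simp
  have f4: "op y g a = op y m a" unfolding y_def using S ee by simp
  have f5: "op y m a = op a m y" unfolding y_def using S ee by simp
  show "\<exists>y\<in>M. \<exists>g\<in>G. \<exists>m\<in>G.
           le a (op (op a g y) m a) \<and> le y (op (op y m a) g y) \<and>
           op a g y = op y g a \<and> op y g a = op y m a \<and> op y m a = op a m y"
    using f1 r2 f3 f4 f5 yM gG mG by blast
qed

end
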